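(* Let $P$ be a program of the imperative language described in the context, and suppose $\vdash P : M$ is derivable in the deterministic calculus, with $M$ an $n\times n$ matrix with coefficients in $\{0,1,2\}^p\to\mathrm{mwp}^{\infty}$. If there exists $\vec a\in\{0,1,2\}^p$ such that no coefficient of $M[\vec a]$ equals $\infty$, then every value computed by $P$ is bounded by a polynomial in the inputs (the initial values of the variables of $P$).
   Context: Language. Variables range over $X_1,\dots,X_n$ (a fixed finite set; these are the program's inputs), and $b$ ranges over boolean expressions (unspecified). Expressions: $e ::= X \mid X - Y \mid X + Y \mid X * Y$. Commands: $C ::= X = e \mid \texttt{if } b \texttt{ then } C \texttt{ else } C \mid \texttt{while } b \texttt{ do } \{C\} \mid \texttt{loop } X \{C\} \mid C;C$, where $\texttt{loop } X\{C\}$ executes $C$ $X$ times. A program is a sequential composition of commands. Semi-rings. $\mathrm{mwp}^\infty$ has carrier $\{0,m,w,p,\infty\}$ with $0<m<w<p<\infty$, addition $\max$, and $\alpha\times\beta=0$ if $\alpha,\beta\neq\infty$ and one of them is $0$, $\max(\alpha,\beta)$ otherwise. $\{0,1,2\}^p\to\mathrm{mwp}^\infty$ is the semi-ring of functions with pointwise operations (constants identified with constant functions). Matrices are $n\times n$ with componentwise $\oplus$, usual product $\otimes$, unit $\mathbf{1}$ ($m$ on the diagonal, $0$ elsewhere), closure $M^*=\mathbf{1}\oplus M\oplus M^2\oplus\cdots$. $M[\vec a]$ is $M$ with every coefficient evaluated at $\vec a$. $\delta(i,k)(\vec a)=m$ if $a_k=i$, $0$ otherwise. $\{^{\alpha}_i\}$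 is the $n$-vector with $\alpha$ in row $i$ and $0$ elsewhere, $\{^\alpha_i,^\beta_j\}=\{^\alpha_i\}\oplus\{^\beta_j\}$, $\mathbf{1}\xleftarrow{j}V$ is the unit matrix with column $j$ replaced by $V$, $\{^\alpha_i\to j\}$ is the matrix with $\alpha$ at $(i,j)$ and $0$ elsewhere. Deterministic calculus $\vdash$: each application of rule E$^A$ receives its own choice index $k\in\{1,\dots,p\}$ ($p$ = number of applications). (E$^A$) for $\star\in\{+,-\}$: $\vdash X_i\star X_j:\delta(0,k)\{^m_i,^p_j\}\oplus\delta(1,k)\{^p_i,^m_j\}\oplus\delta(2,k)\{^w_i,^w_j\}$; (E$^M$) $\vdash X_i*X_j:\{^w_i,^w_j\}$; (E$^S$) $\vdash X_i:\{^m_i\}$; (A) from $\vdash e:V$ infer $\vdash X_j=e:\mathbf{1}\xleftarrow{j}V$; (C) from $\vdash C_1:M_1,\ \vdash C_2:M_2$ infer $\vdash C_1;C_2:M_1\otimes M_2$; (I) same premises, $\vdash\texttt{if } b\texttt{ then } C_1\texttt{ else } C_2:M_1\oplus M_2$; (L$^\infty$) from $\vdash C:M$ infer $\vdash\texttt{loop } X_l\{C\}:M^*\oplus\{^\infty_j\to j\mid M^*_{jj}\neq m\}\oplus\{^p_l\to j\mid\exists i,\ M^*_{ij}=p\}$; (W$^\infty$) from $\vdash C:M$ infer $\vdash\texttt{while } b\texttt{ do }\{C\}:M^*\oplus\{^\infty_j\to j\mid M^*_{jj}\neq m\}\oplus\{^\infty_i\to j\mid M^*_{ij}=p\}$ (conditions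 understood pointwise for each choice assignment). *)

theory Defs
  imports Main
begin

datatype mwp = Zm | Mm | Wm | Pm | Infm

fun mwp_rank :: "mwp \<Rightarrow> nat" where
  "mwp_rank Zm = 0" | "mwp_rank Mm = 1" | "mwp_rank Wm = 2"
| "mwp_rank Pm = 3" | "mwp_rank Infm = 4"

lemma mwp_rank_inj: "mwp_rank x = mwp_rank y \<Longrightarrow> x = y"
  by (cases x; cases y; simp)

instantiation mwp :: linorder
begin
definition less_eq_mwp :: "mwp \<Rightarrow> mwp \<Rightarrow> bool" where
  "less_eq_mwp x y = (mwp_rank x \<le> mwp_rank y)"
definition less_mwp :: "mwp \<Rightarrow> mwp \<Rightarrow> bool" where
  "less_mwp x y = (mwp_rank x < mwp_rank y)"
instance
  by standard (auto simp: less_eq_mwp_def less_mwp_def intro: mwp_rank_inj)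
end

lemma UNIV_mwp: "(UNIV :: mwp set) = {Zm, Mm, Wm, Pm, Infm}"
  using mwp.exhaust by auto

instance mwp :: finite
  by standard (simp add: UNIV_mwp)

definition madd :: "mwp \<Rightarrow> mwp \<Rightarrow> mwp" where
  "madd x y = max x y"

definition mmul :: "mwp \<Rightarrow> mwp \<Rightarrow> mwp" where
  "mmul x y = (if x \<noteq> Infm \<and> y \<noteq> Infm \<and> (x = Zm \<or> y = Zm) then Zm else max x y)"

text \<open>A choice vector is a function from indices to {0,1,2} (only indices 1..p matter).
  Vectors and matrices are indexed by variables 0..n-1.\<close>

type_synonym choice = "nat \<Rightarrow> nat"
type_synonym coef = "choice \<Rightarrow> mwp"
type_synonym vec = "nat \<Rightarrow> coef"
type_synonym mat = "nat \<Rightarrow> nat \<Rightarrow> coef"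

definition msum :: "mwp list \<Rightarrow> mwp" where
  "msum xs = foldr madd xs Zm"

definition unit_mat :: mat where
  "unit_mat i j a = (if i = j then Mm else Zm)"

definition mat_add :: "mat \<Rightarrow> mat \<Rightarrow> mat" where
  "mat_add A B i j a = madd (A i j a) (B i j a)"

definition mat_mul :: "nat \<Rightarrow> mat \<Rightarrow> mat \<Rightarrow> mat" where
  "mat_mul n A B i j a = msum (map (\<lambda>k. mmul (A i k a) (B k j a)) [0..<n])"

fun mat_pow :: "nat \<Rightarrow> mat \<Rightarrow> nat \<Rightarrow> mat" where
  "mat_pow n A 0 = unit_mat"
| "mat_pow n A (Suc k) = mat_mul n (mat_pow n A k) A"

text \<open>Closure M* = 1 + M + M^2 + ...; with addition max on the finite carrier this
  is the (attained) maximum over all powers, computed pointwise.\<close>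
definition mat_star :: "nat \<Rightarrow> mat \<Rightarrow> mat" where
  "mat_star n A i j a = Max (range (\<lambda>k. mat_pow n A k i j a))"

definition delta :: "nat \<Rightarrow> nat \<Rightarrow> coef" where
  "delta i k a = (if a k = i then Mm else Zm)"

definition vsingle :: "nat \<Rightarrow> mwp \<Rightarrow> vec" where
  "vsingle i \<alpha> r a = (if r = i then \<alpha> else Zm)"

definition vpair :: "nat \<Rightarrow> mwp \<Rightarrow> nat \<Rightarrow> mwp \<Rightarrow> vec" where
  "vpair i \<alpha> j \<beta> r a = madd (vsingle i \<alpha> r a) (vsingle j \<beta> r a)"

definition vec_add :: "vec \<Rightarrow> vec \<Rightarrow> vec" where
  "vec_add V W r a = madd (V r a) (W r a)"

definition scal_vec :: "coef \<Rightarrow> vec \<Rightarrow> vec" where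
  "scal_vec c V r a = mmul (c a) (V r a)"

definition col_replace :: "nat \<Rightarrow> vec \<Rightarrow> mat" where
  "col_replace j V r c a = (if c = j then V r a else unit_mat r c a)"

text \<open>Results of the rules (L-infinity) and (W-infinity), pointwise in the choice vector.\<close>
definition loop_mat :: "nat \<Rightarrow> nat \<Rightarrow> mat \<Rightarrow> mat" where
  "loop_mat n l A i j a =
     (let S = mat_star n A in
      madd (S i j a)
        (madd (if i = j \<and> S j j a \<noteq> Mm then Infm else Zm)
              (if i = l \<and> (\<exists>i'<n. S i' j a = Pm) then Pm else Zm)))"

definition while_mat :: "nat \<Rightarrow> mat \<Rightarrow> mat" where
  "while_mat n A i j a =
     (let S = mat_star n A in
      madd (S i j a)
        (madd (if i = j \<and> S j j a \<noteq> Mm then Infm else Zm)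
              (if S i j a = Pm then Infm else Zm)))"

text \<open>Variables X_1..X_n are represented by indices 0..n-1; values are natural numbers
  (subtraction is truncated). Boolean expressions are left unspecified: any predicate on stores.\<close>

type_synonym store = "nat \<Rightarrow> nat"
type_synonym bexp = "store \<Rightarrow> bool"

datatype aexp = V nat | Sub nat nat | Plus nat nat | Times nat nat

datatype cmd =
    Assign nat aexp
  | If bexp cmd cmd
  | While bexp cmd
  | Loop nat cmd
  | Seq cmd cmd

fun aval :: "aexp \<Rightarrow> store \<Rightarrow> nat" where
  "aval (V i) s = s i"
| "aval (Sub i j) s = s i - s j"
| "aval (Plus i j) s = s i + s j"
| "aval (Times i j) s = s i * s j"

inductive exec :: "cmd \<Rightarrow> store \<Rightarrow> store \<Rightarrow> bool"
  and execn :: "cmd \<Rightarrow> nat \<Rightarrow> store \<Rightarrow> store \<Rightarrow> bool" where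
  Assign: "exec (Assign x e) s (s(x := aval e s))"
| IfT: "b s \<Longrightarrow> exec C1 s t \<Longrightarrow> exec (If b C1 C2) s t"
| IfF: "\<not> b s \<Longrightarrow> exec C2 s t \<Longrightarrow> exec (If b C1 C2) s t"
| WhileF: "\<not> b s \<Longrightarrow> exec (While b C) s s"
| WhileT: "b s \<Longrightarrow> exec C s t \<Longrightarrow> exec (While b C) t u \<Longrightarrow> exec (While b C) s u"
| Loop: "execn C (s x) s t \<Longrightarrow> exec (Loop x C) s t"
| Seq: "exec C1 s t \<Longrightarrow> exec C2 t u \<Longrightarrow> exec (Seq C1 C2) s u"
| N0: "execn C 0 s s"
| NSuc: "exec C s t \<Longrightarrow> execn C k t u \<Longrightarrow> execn C (Suc k) s u"

text \<open>etyp n e K V : |- e : V, where K is the set of choice indices used (one fresh index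
  per application of E^A).\<close>
inductive etyp :: "nat \<Rightarrow> aexp \<Rightarrow> nat set \<Rightarrow> vec \<Rightarrow> bool" where
  ES: "i < n \<Longrightarrow> etyp n (V i) {} (vsingle i Mm)"
| EM: "i < n \<Longrightarrow> j < n \<Longrightarrow> etyp n (Times i j) {} (vpair i Wm j Wm)"
| EA_sub: "i < n \<Longrightarrow> j < n \<Longrightarrow> etyp n (Sub i j) {k}
     (vec_add (scal_vec (delta 0 k) (vpair i Mm j Pm))
       (vec_add (scal_vec (delta 1 k) (vpair i Pm j Mm))
                (scal_vec (delta 2 k) (vpair i Wm j Wm))))"
| EA_plus: "i < n \<Longrightarrow> j < n \<Longrightarrow> etyp n (Plus i j) {k}
     (vec_add (scal_vec (delta 0 k) (vpair i Mm j Pm))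
       (vec_add (scal_vec (delta 1 k) (vpair i Pm j Mm))
                (scal_vec (delta 2 k) (vpair i Wm j Wm))))"

text \<open>ctyp n C K M : |- C : M, with K the set of (pairwise distinct) choice indices used.\<close>
inductive ctyp :: "nat \<Rightarrow> cmd \<Rightarrow> nat set \<Rightarrow> mat \<Rightarrow> bool" where
  A: "j < n \<Longrightarrow> etyp n e K W \<Longrightarrow> ctyp n (Assign j e) K (col_replace j W)"
| C: "ctyp n C1 K1 M1 \<Longrightarrow> ctyp n C2 K2 M2 \<Longrightarrow> K1 \<inter> K2 = {} \<Longrightarrow>
      ctyp n (Seq C1 C2) (K1 \<union> K2) (mat_mul n M1 M2)"
| I: "ctyp n C1 K1 M1 \<Longrightarrow> ctyp n C2 K2 M2 \<Longrightarrow> K1 \<inter> K2 = {} \<Longrightarrow>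
      ctyp n (If b C1 C2) (K1 \<union> K2) (mat_add M1 M2)"
| L: "l < n \<Longrightarrow> ctyp n C K M \<Longrightarrow> ctyp n (Loop l C) K (loop_mat n l M)"
| W: "ctyp n C K M \<Longrightarrow> ctyp n (While b C) K (while_mat n M)"

inductive_set polys :: "nat \<Rightarrow> (store \<Rightarrow> nat) set" for n where
  const: "(\<lambda>s. c) \<in> polys n"
| var: "i < n \<Longrightarrow> (\<lambda>s. s i) \<in> polys n"
| add: "q1 \<in> polys n \<Longrightarrow> q2 \<in> polys n \<Longrightarrow> (\<lambda>s. q1 s + q2 s) \<in> polys n"
| mul: "q1 \<in> polys n \<Longrightarrow> q2 \<in> polys n \<Longrightarrow> (\<lambda>s. q1 s * q2 s) \<in> polys n"

end

theory Submission
  imports Defs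
begin


definition Fb :: "nat \<Rightarrow> nat \<Rightarrow> nat" where
  "Fb d x = x * (2 + x) ^ d"

lemma Fb_ge: "x \<le> Fb d x"
  unfolding Fb_def by simp

lemma Fb_zero[simp]: "Fb d 0 = 0"
  unfolding Fb_def by simp

lemma Fb_mono: "x \<le> y \<Longrightarrow> d \<le> e \<Longrightarrow> Fb d x \<le> Fb e y"
proof -
  assume a: "x \<le> y" "d \<le> e"
  have "(2 + x) ^ d \<le> (2 + y) ^ d" using a by (simp add: power_mono)
  also have "\<dots> \<le> (2 + y) ^ e" using a by (simp add: power_increasing)
  finally show ?thesis unfolding Fb_def using a by (simp add: mult_le_mono)
qed

lemma Fb_add: "Fb a x + Fb b x \<le> Fb (max a b + 1) x"
proof -
  have "Fb a x + Fb b x \<le> 2 * Fb (max a b) x"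
    using Fb_mono[of x x a "max a b"] Fb_mono[of x x b "max a b"] by simp
  also have "\<dots> = x * (2 * (2 + x) ^ max a b)" unfolding Fb_def by simp
  also have "\<dots> \<le> x * ((2 + x) * (2 + x) ^ max a b)"
    by (intro mult_le_mono) auto
  finally show ?thesis unfolding Fb_def by simp
qed

lemma Fb_scale: "c * Fb a x \<le> Fb (a + c) x"
proof -
  have "c \<le> (2 + x) ^ c"
  proof -
    have "c < 2 ^ c" by (rule less_exp)
    also have "(2::nat) ^ c \<le> (2 + x) ^ c" by (simp add: power_mono)
    finally show ?thesis by simp
  qed
  hence "c * (x * (2 + x) ^ a) \<le> (2 + x) ^ c * (x * (2 + x) ^ a)" by simp
  thus ?thesis unfolding Fb_def by (simp add: power_add algebra_simps)
qed

lemma pow_aux: "x * (z::nat) ^ b * (z ^ (b + 1)) ^ a = x * z ^ (b + a * (b + 1))"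
proof -
  have "(z ^ (b + 1)) ^ a = z ^ ((b + 1) * a)" by (rule power_mult[symmetric])
  hence "(z ^ (b + 1)) ^ a = z ^ (a * (b + 1))" by (simp only: mult.commute)
  thus ?thesis by (simp add: power_add mult.assoc)
qed

lemma Fb_comp: "Fb a (Fb b x) \<le> Fb (b + a * (b + 1)) x"
proof -
  have h: "2 + Fb b x \<le> (2 + x) ^ (b + 1)"
  proof -
    define y where "y = (2 + x) ^ b"
    have y1: "1 \<le> y" unfolding y_def by simp
    have "(2 + x) ^ (b + 1) = (2 + x) * y" unfolding y_def by simp
    moreover have "Fb b x = x * y" unfolding Fb_def y_def by simp
    moreover have "2 + x * y \<le> (2 + x) * y" using y1 by (simp add: algebra_simps)
    ultimately show ?thesis by simp
  qed
  have "Fb a (Fb b x) = Fb b x * (2 + Fb b x) ^ a" unfolding Fb_def by simp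
  also have "\<dots> \<le> Fb b x * ((2 + x) ^ (b + 1)) ^ a"
    by (intro mult_le_mono power_mono h) auto
  also have "\<dots> = Fb (b + a * (b + 1)) x" unfolding Fb_def
    by (rule pow_aux)
  finally show ?thesis .
qed

lemma Fb_succ: "Fb E x + (3 + x) ^ E \<le> Fb E (x + 1)"
proof -
  define y where "y = (3 + x) ^ E"
  define z where "z = (2 + x) ^ E"
  have zy: "z \<le> y" unfolding y_def z_def by (simp add: power_mono)
  have e1: "Fb E x = x * z" unfolding Fb_def z_def by simp
  have t: "2 + (x + 1) = 3 + x" by simp
  have e2: "Fb E (x + 1) = (x + 1) * y" unfolding Fb_def y_def t ..
  have "x * z \<le> x * y" using zy by simp
  thus ?thesis unfolding e1 e2 y_def[symmetric] by (simp add: algebra_simps)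
qed

lemma Fb_small: "2 * Fb G x \<le> (3 + x) ^ (G + 2)"
proof -
  define y where "y = (3 + x) ^ G"
  define z where "z = (2 + x) ^ G"
  have zy: "z \<le> y" unfolding y_def z_def by (simp add: power_mono)
  have e1: "Fb G x = x * z" unfolding Fb_def z_def by simp
  have e2: "(3 + x) ^ (G + 2) = (3 + x) * (3 + x) * y" unfolding y_def
    by (simp add: power_add algebra_simps power2_eq_square)
  have "2 * x \<le> (3 + x) * (3 + x)" by (simp add: algebra_simps)
  hence "2 * x * z \<le> (3 + x) * (3 + x) * y" using zy by (rule mult_le_mono)
  thus ?thesis unfolding e1 e2 by (simp add: algebra_simps)
qed

lemma Fb_max: "Fb a (max x y) \<le> Fb a x + Fb a y"
  by (cases "x \<le> y") (auto simp: max_def)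

lemma mwp_le_simps[simp]:
  "Zm \<le> x" "x \<le> Infm" "(x \<le> Zm) = (x = Zm)" "(Infm \<le> x) = (x = Infm)"
  "Mm \<le> Wm" "Mm \<le> Pm" "Wm \<le> Pm" "\<not> Wm \<le> Mm" "\<not> Pm \<le> Mm" "\<not> Pm \<le> Wm"
  by (cases x; simp add: less_eq_mwp_def)+

lemma mmul_cases: "mmul x y = (if x = Infm \<or> y = Infm then Infm else if x = Zm \<or> y = Zm then Zm else max x y)"
  by (cases x; cases y; simp add: mmul_def max_def)

lemma mmul_assoc: "mmul (mmul x y) z = mmul x (mmul y z)"
  by (cases x; cases y; cases z; simp add: mmul_def max_def)

lemma mmul_mono: "x \<le> x' \<Longrightarrow> y \<le> y' \<Longrightarrow> mmul x y \<le> mmul x' y'"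
  by (cases x; cases y; cases x'; cases y'; simp add: mmul_def max_def less_eq_mwp_def)

lemma mmul_Mm[simp]: "mmul Mm x = x"
  by (cases x; simp add: mmul_def max_def)

lemma mmul_Inf[simp]: "mmul Infm x = Infm" "mmul x Infm = Infm"
  by (cases x; simp add: mmul_def max_def)+

lemma mmul_Zm[simp]: "x \<noteq> Infm \<Longrightarrow> mmul x Zm = Zm" "x \<noteq> Infm \<Longrightarrow> mmul Zm x = Zm"
  by (cases x; simp add: mmul_def max_def)+

lemma mmul_nz: "x \<noteq> Zm \<Longrightarrow> y \<noteq> Zm \<Longrightarrow> mmul x y = max x y"
  by (cases x; cases y; simp add: mmul_def max_def)

lemma madd_max: "madd x y = max x y" by (simp add: madd_def)

lemma msum_Cons[simp]: "msum (x # xs) = max x (msum xs)" "msum [] = Zm"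
  by (simp_all add: msum_def madd_def)

lemma msum_ge: "x \<in> set xs \<Longrightarrow> x \<le> msum xs"
  by (induction xs) (auto simp: le_max_iff_disj)

lemma msum_in: "msum xs = Zm \<or> msum xs \<in> set xs"
  by (induction xs) (auto simp: max_def)

lemma msum_ge_map: "x \<in> set xs \<Longrightarrow> f x \<le> msum (map f xs)"
  by (rule msum_ge) simp

lemma msum_le: "(\<And>x. x \<in> set xs \<Longrightarrow> x \<le> y) \<Longrightarrow> msum xs \<le> y"
  by (induction xs) auto

section \<open>Bounds\<close>

definition Xs :: "nat \<Rightarrow> (nat \<Rightarrow> nat \<Rightarrow> mwp) \<Rightarrow> nat \<Rightarrow> store \<Rightarrow> nat" where
  "Xs n L j s = Max (insert 0 (s ` {i. i < n \<and> L i j = Mm}))"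

definition Ws :: "nat \<Rightarrow> (nat \<Rightarrow> nat \<Rightarrow> mwp) \<Rightarrow> nat \<Rightarrow> store \<Rightarrow> nat" where
  "Ws n L j s = sum s {i. i < n \<and> (L i j = Wm \<or> L i j = Pm)}"

definition Ps :: "nat \<Rightarrow> (nat \<Rightarrow> nat \<Rightarrow> mwp) \<Rightarrow> nat \<Rightarrow> store \<Rightarrow> nat" where
  "Ps n L j s = sum s {i. i < n \<and> L i j = Pm}"

definition bnd :: "nat \<Rightarrow> (nat \<Rightarrow> nat \<Rightarrow> mwp) \<Rightarrow> nat \<Rightarrow> nat \<Rightarrow> store \<Rightarrow> nat" where
  "bnd n L d j s = max (Xs n L j s) (Fb d (Ws n L j s)) + Fb d (Ps n L j s)"

lemma Xs_ge: "i < n \<Longrightarrow> L i j = Mm \<Longrightarrow> s i \<le> Xs n L j s"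
  unfolding Xs_def by (rule Max_ge) auto

lemma Xs_le: "(\<And>i. i < n \<Longrightarrow> L i j = Mm \<Longrightarrow> s i \<le> y) \<Longrightarrow> Xs n L j s \<le> y"
  unfolding Xs_def by (subst Max_le_iff) auto

lemma Ws_ge: "i < n \<Longrightarrow> L i j = Wm \<or> L i j = Pm \<Longrightarrow> s i \<le> Ws n L j s"
  unfolding Ws_def by (rule member_le_sum) auto

lemma Ps_ge: "i < n \<Longrightarrow> L i j = Pm \<Longrightarrow> s i \<le> Ps n L j s"
  unfolding Ps_def by (rule member_le_sum) auto

lemma Ps_le_Ws: "Ps n L j s \<le> Ws n L j s"
  unfolding Ps_def Ws_def by (rule sum_mono2) auto

lemma var_le:
  assumes "i < n" "L i j \<noteq> Zm" "L i j \<noteq> Infm"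
  shows "s i \<le> max (Xs n L j s) (Ws n L j s)"
proof (cases "L i j = Mm")
  case True thus ?thesis using Xs_ge[of i n L j s, OF assms(1) True] by (simp add: le_max_iff_disj)
next
  case False
  hence "L i j = Wm \<or> L i j = Pm" using assms by (cases "L i j") auto
  thus ?thesis using Ws_ge[OF assms(1)] by (simp add: le_max_iff_disj)
qed

lemma var_le_bnd:
  assumes "i < n" "L i j \<noteq> Zm" "L i j \<noteq> Infm"
  shows "s i \<le> bnd n L d j s"
proof -
  have "s i \<le> max (Xs n L j s) (Ws n L j s)" by (rule var_le[of i n L j s, OF assms])
  also have "\<dots> \<le> max (Xs n L j s) (Fb d (Ws n L j s))"
    using Fb_ge[of "Ws n L j s" d] by (rule max.mono[OF order_refl])
  finally show ?thesis unfolding bnd_def by simp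
qed

context
  fixes n :: nat and L R :: "nat \<Rightarrow> nat \<Rightarrow> mwp" and i j :: nat and f :: mwp
  assumes tr: "\<forall>i'<n. L i' i \<noteq> Zm \<longrightarrow> max f (L i' i) \<le> R i' j"
    and nf: "\<forall>i'<n. R i' j \<noteq> Infm"
begin

lemma tr_X: "Xs n L i s \<le> max (Xs n R j s) (Ws n R j s)"
proof (rule Xs_le)
  fix i' assume a: "i' < n" "L i' i = Mm"
  hence "Mm \<le> R i' j" using tr by (auto simp: le_max_iff_disj)
  hence "R i' j \<noteq> Zm" by auto
  thus "s i' \<le> max (Xs n R j s) (Ws n R j s)" using var_le a nf by blast
qed

lemma tr_W: "Ws n L i s \<le> Ws n R j s"
  unfolding Ws_def
proof (rule sum_mono2)
  show "{i'. i' < n \<and> (L i' i = Wm \<or> L i' i = Pm)} \<subseteq> {i. i < n \<and> (R i j = Wm \<or> R i j = Pm)}"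
  proof
    fix i' assume "i' \<in> {i'. i' < n \<and> (L i' i = Wm \<or> L i' i = Pm)}"
    hence a: "i' < n" "L i' i = Wm \<or> L i' i = Pm" by auto
    hence "Wm \<le> L i' i" "L i' i \<le> R i' j" using tr by (auto simp: le_max_iff_disj)
    hence "Wm \<le> R i' j" by (rule order_trans)
    moreover have "R i' j \<noteq> Infm" using nf a by auto
    ultimately show "i' \<in> {i. i < n \<and> (R i j = Wm \<or> R i j = Pm)}" using a
      by (cases "R i' j") (auto simp: less_eq_mwp_def)
  qed
qed auto

lemma tr_P: "Ps n L i s \<le> Ps n R j s"
  unfolding Ps_def
proof (rule sum_mono2)
  show "{i'. i' < n \<and> L i' i = Pm} \<subseteq> {i. i < n \<and> R i j = Pm}"
  proof
    fix i' assume "i' \<in> {i'. i' < n \<and> L i' i = Pm}"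
    hence a: "i' < n" "L i' i = Pm" by auto
    hence "Pm \<le> R i' j" using tr by (auto simp: le_max_iff_disj intro: order_trans)
    moreover have "R i' j \<noteq> Infm" using nf a by auto
    ultimately show "i' \<in> {i. i < n \<and> R i j = Pm}" using a
      by (cases "R i' j") (auto simp: less_eq_mwp_def)
  qed
qed auto

lemma tr_Xw: "Wm \<le> f \<Longrightarrow> Xs n L i s \<le> Ws n R j s"
proof (rule Xs_le)
  fix i' assume w: "Wm \<le> f" and a: "i' < n" "L i' i = Mm"
  hence "Wm \<le> R i' j" using tr by (auto simp: le_max_iff_disj intro: order_trans)
  moreover have "R i' j \<noteq> Infm" using nf a by auto
  ultimately have "R i' j = Wm \<or> R i' j = Pm" by (cases "R i' j") (auto simp: less_eq_mwp_def)
  thus "s i' \<le> Ws n R j s" using Ws_ge a by blast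
qed

lemma tr_Xp: "f = Pm \<Longrightarrow> Xs n L i s \<le> Ps n R j s"
proof (rule Xs_le)
  fix i' assume w: "f = Pm" and a: "i' < n" "L i' i = Mm"
  hence "Pm \<le> R i' j" using tr by (auto simp: le_max_iff_disj intro: order_trans)
  moreover have "R i' j \<noteq> Infm" using nf a by auto
  ultimately have "R i' j = Pm" by (cases "R i' j") (auto simp: less_eq_mwp_def)
  thus "s i' \<le> Ps n R j s" using Ps_ge a by blast
qed

lemma tr_Wp: "f = Pm \<Longrightarrow> Ws n L i s \<le> Ps n R j s"
  unfolding Ps_def Ws_def
proof (rule sum_mono2)
  assume fp: "f = Pm"
  show "{i'. i' < n \<and> (L i' i = Wm \<or> L i' i = Pm)} \<subseteq> {i. i < n \<and> R i j = Pm}"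
  proof
    fix i' assume "i' \<in> {i'. i' < n \<and> (L i' i = Wm \<or> L i' i = Pm)}"
    hence a: "i' < n" "L i' i \<noteq> Zm" by auto
    hence "Pm \<le> R i' j" using tr fp by (auto simp: le_max_iff_disj intro: order_trans)
    moreover have "R i' j \<noteq> Infm" using nf a by auto
    ultimately show "i' \<in> {i. i < n \<and> R i j = Pm}" using a
      by (cases "R i' j") (auto simp: less_eq_mwp_def)
  qed
qed auto

lemma tr_bnd: "bnd n L d i s \<le> bnd n R d j s"
proof -
  have "Xs n L i s \<le> max (Xs n R j s) (Fb d (Ws n R j s))"
    using tr_X[of s] Fb_ge[of "Ws n R j s" d] by (simp add: max_def split: if_splits)
  moreover have "Fb d (Ws n L i s) \<le> Fb d (Ws n R j s)" using tr_W Fb_mono by blast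
  moreover have "Fb d (Ps n L i s) \<le> Fb d (Ps n R j s)" using tr_P Fb_mono by blast
  ultimately show ?thesis unfolding bnd_def by (simp add: max_def split: if_splits)
qed

lemma tr_bnd_w: "Wm \<le> f \<Longrightarrow> bnd n L d i s \<le> 2 * Fb d (Ws n R j s)"
proof -
  assume w: "Wm \<le> f"
  have "Xs n L i s \<le> Fb d (Ws n R j s)"
    using tr_Xw[OF w, of s] Fb_ge[of "Ws n R j s" d] by simp
  moreover have "Fb d (Ws n L i s) \<le> Fb d (Ws n R j s)" using tr_W Fb_mono by blast
  moreover have "Fb d (Ps n L i s) \<le> Fb d (Ws n R j s)"
    using tr_P[of s] Ps_le_Ws[of n R j s] Fb_mono by (meson order_trans order_refl)
  ultimately show ?thesis unfolding bnd_def by simp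
qed

lemma tr_bnd_p: "f = Pm \<Longrightarrow> bnd n L d i s \<le> 2 * Fb d (Ps n R j s)"
proof -
  assume w: "f = Pm"
  have "Xs n L i s \<le> Fb d (Ps n R j s)"
    using tr_Xp[OF w, of s] Fb_ge[of "Ps n R j s" d] by simp
  moreover have "Fb d (Ws n L i s) \<le> Fb d (Ps n R j s)" using tr_Wp[OF w] Fb_mono by blast
  moreover have "Fb d (Ps n L i s) \<le> Fb d (Ps n R j s)" using tr_P Fb_mono by blast
  ultimately show ?thesis unfolding bnd_def by simp
qed

end

lemma bnd_mono_d: "d \<le> e \<Longrightarrow> bnd n L d j s \<le> bnd n L e j s"
proof -
  assume "d \<le> e"
  hence "Fb d (Ws n L j s) \<le> Fb e (Ws n L j s)" "Fb d (Ps n L j s) \<le> Fb e (Ps n L j s)"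
    using Fb_mono by auto
  thus ?thesis unfolding bnd_def by (simp add: add_mono max.mono)
qed


definition inff :: "nat \<Rightarrow> (nat \<Rightarrow> nat \<Rightarrow> mwp) \<Rightarrow> bool" where
  "inff n L = (\<forall>i<n. \<forall>j<n. L i j \<noteq> Infm)"

definition sem :: "nat \<Rightarrow> cmd \<Rightarrow> (nat \<Rightarrow> nat \<Rightarrow> mwp) \<Rightarrow> bool" where
  "sem n c L = (\<exists>d. \<forall>s t. exec c s t \<longrightarrow> (\<forall>j<n. t j \<le> bnd n L d j s))"

lemma Fb_chain: "Fb d2 (n * (2 * Fb d1 x)) \<le> Fb (d1 + 2 * n + d2 * (d1 + 2 * n + 1)) x"
proof -
  have "n * (2 * Fb d1 x) = (2 * n) * Fb d1 x" by simp
  also have "\<dots> \<le> Fb (d1 + 2 * n) x" by (rule Fb_scale)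
  finally have "Fb d2 (n * (2 * Fb d1 x)) \<le> Fb d2 (Fb (d1 + 2 * n) x)" using Fb_mono by blast
  also have "\<dots> \<le> Fb (d1 + 2 * n + d2 * (d1 + 2 * n + 1)) x" by (rule Fb_comp)
  finally show ?thesis .
qed

lemma sum_le_card:
  assumes "A \<subseteq> {..<n}" "\<And>i. i \<in> A \<Longrightarrow> f i \<le> (K::nat)"
  shows "sum f A \<le> n * K"
proof -
  have "sum f A \<le> card A * K" using sum_bounded_above[of A f K] assms(2) by simp
  also have "card A \<le> n" using card_mono[OF _ assms(1)] by simp
  hence "card A * K \<le> n * K" by simp
  finally show ?thesis .
qed

lemma max_arith: "(A::nat) \<le> B' \<Longrightarrow> B \<le> B' \<Longrightarrow> p1 + pG \<le> P' \<Longrightarrow> max (max X A + p1) B + pG \<le> max X B' + P'"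
  by (auto simp: max_def)

lemma seq_bound:
  fixes L1 L2 :: "nat \<Rightarrow> nat \<Rightarrow> mwp" and n :: nat
  defines "N \<equiv> \<lambda>i j. msum (map (\<lambda>k. mmul (L1 i k) (L2 k j)) [0..<n])"
  assumes nf: "inff n N"
    and h1: "\<forall>k<n. t k \<le> bnd n L1 d1 k s"
    and h2: "\<forall>j<n. u j \<le> bnd n L2 d2 j t"
    and j: "j < n"
  shows "u j \<le> bnd n N (d1 + 2 * n + d2 * (d1 + 2 * n + 1) + 1) j s"
proof -
  define G where "G = d1 + 2 * n + d2 * (d1 + 2 * n + 1)"
  let ?X = "Xs n N j s" and ?W = "Ws n N j s" and ?P = "Ps n N j s"
  have nfj: "\<forall>i'<n. N i' j \<noteq> Infm" using nf j unfolding inff_def by auto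
  have le: "mmul (L1 i k) (L2 k j) \<le> N i j" if "k < n" for i k
    unfolding N_def by (rule msum_ge) (use that in auto)
  have trk: "\<forall>i'<n. L1 i' k \<noteq> Zm \<longrightarrow> max (L2 k j) (L1 i' k) \<le> N i' j"
    if "k < n" "L2 k j \<noteq> Zm" for k
  proof (intro allI impI)
    fix i' assume "i' < n" "L1 i' k \<noteq> Zm"
    hence "mmul (L1 i' k) (L2 k j) = max (L2 k j) (L1 i' k)"
      using that(2) by (simp add: mmul_nz max.commute)
    thus "max (L2 k j) (L1 i' k) \<le> N i' j" using le[OF that(1), of i'] by simp
  qed
  have X: "Xs n L2 j t \<le> bnd n N d1 j s"
  proof (rule Xs_le)
    fix k assume k: "k < n" "L2 k j = Mm"
    have nz: "L2 k j \<noteq> Zm" using k by auto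
    have "t k \<le> bnd n L1 d1 k s" using h1 k by auto
    also have "\<dots> \<le> bnd n N d1 j s" using tr_bnd[where L=L1 and R=N and i=k and j=j and f="L2 k j", OF trk[OF k(1) nz] nfj] k by auto
    finally show "t k \<le> bnd n N d1 j s" .
  qed
  have W: "Ws n L2 j t \<le> n * (2 * Fb d1 ?W)"
    unfolding Ws_def[of n L2 j t]
  proof (rule sum_le_card)
    fix k assume "k \<in> {i. i < n \<and> (L2 i j = Wm \<or> L2 i j = Pm)}"
    hence k: "k < n" "L2 k j = Wm \<or> L2 k j = Pm" by auto
    have nz: "L2 k j \<noteq> Zm" using k by auto
    have "t k \<le> bnd n L1 d1 k s" using h1 k by auto
    also have "\<dots> \<le> 2 * Fb d1 ?W" using tr_bnd_w[where L=L1 and R=N and i=k and j=j and f="L2 k j", OF trk[OF k(1) nz] nfj] k by auto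
    finally show "t k \<le> 2 * Fb d1 ?W" .
  qed auto
  have P: "Ps n L2 j t \<le> n * (2 * Fb d1 ?P)"
    unfolding Ps_def[of n L2 j t]
  proof (rule sum_le_card)
    fix k assume "k \<in> {i. i < n \<and> L2 i j = Pm}"
    hence k: "k < n" "L2 k j = Pm" by auto
    have nz: "L2 k j \<noteq> Zm" using k by auto
    have "t k \<le> bnd n L1 d1 k s" using h1 k by auto
    also have "\<dots> \<le> 2 * Fb d1 ?P" using tr_bnd_p[where L=L1 and R=N and i=k and j=j and f="L2 k j", OF trk[OF k(1) nz] nfj] k by auto
    finally show "t k \<le> 2 * Fb d1 ?P" .
  qed auto
  have FW: "Fb d2 (Ws n L2 j t) \<le> Fb G ?W"
    using Fb_mono[OF W order_refl, of d2] Fb_chain[of d2 n d1 ?W] unfolding G_def by linarith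
  have FP: "Fb d2 (Ps n L2 j t) \<le> Fb G ?P"
    using Fb_mono[OF P order_refl, of d2] Fb_chain[of d2 n d1 ?P] unfolding G_def by linarith
  have "u j \<le> bnd n L2 d2 j t" using h2 j by auto
  also have "\<dots> \<le> max (bnd n N d1 j s) (Fb G ?W) + Fb G ?P"
    unfolding bnd_def[of n L2 d2 j t] using X FW FP by (simp add: add_mono max.mono)
  also have "\<dots> \<le> max ?X (Fb (G + 1) ?W) + Fb (G + 1) ?P"
    unfolding bnd_def
  proof (rule max_arith)
    show "Fb d1 ?W \<le> Fb (G + 1) ?W" by (rule Fb_mono) (auto simp: G_def)
    show "Fb G ?W \<le> Fb (G + 1) ?W" by (rule Fb_mono) auto
    have "Fb d1 ?P + Fb G ?P \<le> Fb (max d1 G + 1) ?P" by (rule Fb_add)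
    moreover have "max d1 G = G" by (auto simp: G_def)
    ultimately show "Fb d1 ?P + Fb G ?P \<le> Fb (G + 1) ?P" by simp
  qed
  finally show ?thesis unfolding bnd_def G_def .
qed


section \<open>Iteration\<close>

inductive_cases execn0E: "execn c 0 s t"
inductive_cases execnSE: "execn c (Suc k) s t"

lemma execn_snoc: "execn c (Suc k) s u \<longleftrightarrow> (\<exists>t. execn c k s t \<and> exec c t u)"
proof (induction k arbitrary: s)
  case 0
  show ?case
  proof
    assume "execn c (Suc 0) s u"
    then obtain t where "exec c s t" "execn c 0 t u" by (auto elim: execnSE)
    thus "\<exists>t. execn c 0 s t \<and> exec c t u" by (auto elim: execn0E intro: Defs.exec_execn.N0)
  next
    assume "\<exists>t. execn c 0 s t \<and> exec c t u"
    thus "execn c (Suc 0) s u" by (auto elim: execn0E intro: Defs.exec_execn.NSuc Defs.exec_execn.N0)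
  qed
next
  case (Suc k)
  show ?case
  proof
    assume "execn c (Suc (Suc k)) s u"
    then obtain t where t: "exec c s t" "execn c (Suc k) t u" by (auto elim: execnSE)
    then obtain t' where "execn c k t t'" "exec c t' u" using Suc.IH by blast
    thus "\<exists>t. execn c (Suc k) s t \<and> exec c t u" using t by (auto intro: Defs.exec_execn.NSuc)
  next
    assume "\<exists>t. execn c (Suc k) s t \<and> exec c t u"
    then obtain t where t: "execn c (Suc k) s t" "exec c t u" by blast
    then obtain t' where t': "exec c s t'" "execn c k t' t" by (auto elim: execnSE)
    hence "execn c (Suc k) t' u" using Suc.IH t by blast
    thus "execn c (Suc (Suc k)) s u" using t' by (auto intro: Defs.exec_execn.NSuc)
  qed
qed

definition pc :: "nat \<Rightarrow> (nat \<Rightarrow> nat \<Rightarrow> mwp) \<Rightarrow> nat \<Rightarrow> bool" where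
  "pc n S j = (\<exists>i<n. S i j = Pm)"

definition Bk :: "nat \<Rightarrow> (nat \<Rightarrow> nat \<Rightarrow> mwp) \<Rightarrow> nat \<Rightarrow> nat \<Rightarrow> nat \<Rightarrow> store \<Rightarrow> nat" where
  "Bk n S E k j s = max (Xs n S j s) (Fb E (Ws n S j s)) + Fb E (Ps n S j s + (if pc n S j then k else 0))"

lemma Ps_nopc: "\<not> pc n S j \<Longrightarrow> Ps n S j s = 0"
  unfolding Ps_def pc_def by auto

lemma iter_arith:
  fixes X W P K xj wt pt :: nat
  assumes xj: "xj \<le> max X (Fb E W) + Fb E (P + K)"
    and wt: "wt \<le> n * (2 * Fb E0 (max W (P + K)))"
    and pt: "pt \<le> n * (2 * Fb E0 (P + K))"
    and G: "G = E0 + 2 * n + d * (E0 + 2 * n + 1)" and E: "E = G + 2"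
    and np: "\<not> b \<Longrightarrow> P = 0 \<and> K = 0"
    and K': "K' = (if b then K + 1 else K)"
  shows "max xj (Fb d wt) + Fb d pt \<le> max X (Fb E W) + Fb E (P + K')"
proof -
  have fw: "Fb d wt \<le> Fb G (max W (P + K))"
    unfolding G by (rule order_trans[OF Fb_mono[OF wt order_refl] Fb_chain])
  have fw2: "Fb G (max W (P + K)) \<le> Fb G W + Fb G (P + K)" by (rule Fb_max)
  have fp: "Fb d pt \<le> Fb G (P + K)"
    unfolding G by (rule order_trans[OF Fb_mono[OF pt order_refl] Fb_chain])
  have GE: "Fb G W \<le> Fb E W" using Fb_mono[of W W G E] E by simp
  have main: "max xj (Fb d wt) + Fb d pt \<le> max X (Fb E W) + Fb E (P + K) + 2 * Fb G (P + K)"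
    using xj fw fw2 fp GE by (simp add: max_def split: if_splits)
  show ?thesis
  proof (cases b)
    case True
    have "2 * Fb G (P + K) \<le> (3 + (P + K)) ^ (G + 2)" by (rule Fb_small)
    hence "Fb E (P + K) + 2 * Fb G (P + K) \<le> Fb E (P + K + 1)"
      using Fb_succ[of E "P + K"] unfolding E by linarith
    thus ?thesis using main True K' by simp
  next
    case False
    thus ?thesis using main np K' by simp
  qed
qed

lemma iteration:
  fixes S :: "nat \<Rightarrow> nat \<Rightarrow> mwp"
  assumes nfS: "inff n S" and diag: "\<forall>j<n. S j j = Mm"
    and trans: "\<forall>i k j. i < n \<longrightarrow> k < n \<longrightarrow> j < n \<longrightarrow> mmul (S i k) (S k j) \<le> S i j"
    and step: "\<forall>s t. exec c s t \<longrightarrow> (\<forall>j<n. t j \<le> bnd n S d j s)"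
  shows "\<exists>E. \<forall>k s t. execn c k s t \<longrightarrow> (\<forall>j<n. t j \<le> Bk n S E k j s)"
proof -
  define D where "D j = {i. i < n \<and> S i j \<noteq> Zm}" for j
  have finD: "finite (D j)" for j unfolding D_def by auto
  have T1: "\<forall>i'<n. S i' i \<noteq> Zm \<longrightarrow> max (S i j) (S i' i) \<le> S i' j"
    if "i < n" "j < n" "S i j \<noteq> Zm" for i j
  proof (intro allI impI)
    fix i' assume "i' < n" "S i' i \<noteq> Zm"
    hence "mmul (S i' i) (S i j) = max (S i j) (S i' i)"
      using that(3) by (simp add: mmul_nz max.commute)
    thus "max (S i j) (S i' i) \<le> S i' j" using trans that \<open>i' < n\<close> by metis
  qed
  have nfj: "\<forall>i'<n. S i' j \<noteq> Infm" if "j < n" for j using nfS that unfolding inff_def by auto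
  have T2: "card (D i) < card (D j)" if "i < n" "j < n" "Wm \<le> S i j" for i j
  proof (rule psubset_card_mono[OF finD])
    have nz: "S i j \<noteq> Zm" using that(3) by auto
    have sub: "D i \<subseteq> D j"
    proof
      fix i' assume "i' \<in> D i"
      hence "i' < n" "S i' i \<noteq> Zm" unfolding D_def by auto
      hence "S i' i \<le> S i' j" using T1[OF that(1,2) nz] by (auto simp: le_max_iff_disj)
      thus "i' \<in> D j" using \<open>i' \<in> D i\<close> unfolding D_def by auto
    qed
    have "j \<in> D j" using diag that unfolding D_def by auto
    moreover have "j \<notin> D i"
    proof
      assume "j \<in> D i"
      hence "S j i \<noteq> Zm" unfolding D_def by auto
      hence "max (S i j) (S j i) \<le> S j j" using T1[OF that(1,2) nz] that by auto
      hence "Wm \<le> S j j" using that(3) by (auto simp: le_max_iff_disj intro: order_trans)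
      thus False using diag that by auto
    qed
    ultimately show "D i \<subset> D j" using sub by auto
  qed
  have T3: "pc n S i \<Longrightarrow> pc n S j" if "i < n" "j < n" "S i j \<noteq> Zm" for i j
  proof -
    assume "pc n S i"
    then obtain i' where i': "i' < n" "S i' i = Pm" unfolding pc_def by auto
    hence "Pm \<le> S i' j" using T1[OF that] by (auto simp: le_max_iff_disj)
    hence "S i' j = Pm" using nfj[OF that(2)] i' by (cases "S i' j") (auto simp: less_eq_mwp_def)
    thus "pc n S j" using i' unfolding pc_def by auto
  qed
  have B1: "Bk n S E k i s \<le> Bk n S E k j s" if "i < n" "j < n" "S i j \<noteq> Zm" for i j E k s
  proof -
    note tr = T1[OF that] nfj[OF that(2)]
    have "Xs n S i s \<le> max (Xs n S j s) (Fb E (Ws n S j s))"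
      using tr_X[where L=S and R=S and i=i and j=j and f="S i j", OF tr, of s]
        Fb_ge[of "Ws n S j s" E] by (simp add: max_def split: if_splits)
    moreover have "Fb E (Ws n S i s) \<le> Fb E (Ws n S j s)"
      using tr_W[where L=S and R=S and i=i and j=j and f="S i j", OF tr] Fb_mono by blast
    moreover have "Ps n S i s + (if pc n S i then k else 0) \<le> Ps n S j s + (if pc n S j then k else 0)"
      using tr_P[where L=S and R=S and i=i and j=j and f="S i j", OF tr, of s] T3[OF that] by auto
    hence "Fb E (Ps n S i s + (if pc n S i then k else 0)) \<le> Fb E (Ps n S j s + (if pc n S j then k else 0))"
      using Fb_mono by blast
    ultimately show ?thesis unfolding Bk_def by (simp add: max_def split: if_splits)
  qed
  have B2: "Bk n S E k i s \<le> 2 * Fb E (max (Ws n S j s) (Ps n S j s + (if pc n S j then k else 0)))"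
    if "i < n" "j < n" "Wm \<le> S i j" for i j E k s
  proof -
    have nz: "S i j \<noteq> Zm" using that by auto
    note tr = T1[OF that(1,2) nz] nfj[OF that(2)]
    let ?M = "max (Ws n S j s) (Ps n S j s + (if pc n S j then k else 0))"
    have "Xs n S i s \<le> Ws n S j s"
      using tr_Xw[where L=S and R=S and i=i and j=j and f="S i j", OF tr that(3)] .
    hence "Xs n S i s \<le> Fb E ?M" using Fb_ge[of ?M E] by linarith
    moreover have "Fb E (Ws n S i s) \<le> Fb E ?M"
      using tr_W[where L=S and R=S and i=i and j=j and f="S i j", OF tr, of s] Fb_mono by fastforce
    moreover have "Ps n S i s + (if pc n S i then k else 0) \<le> Ps n S j s + (if pc n S j then k else 0)"
      using tr_P[where L=S and R=S and i=i and j=j and f="S i j", OF tr, of s] T3[OF that(1,2) nz] by auto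
    hence "Fb E (Ps n S i s + (if pc n S i then k else 0)) \<le> Fb E ?M"
      using Fb_mono by fastforce
    ultimately show ?thesis unfolding Bk_def by (simp add: max_def split: if_splits)
  qed
  have B3: "Bk n S E k i s \<le> 2 * Fb E (Ps n S j s + (if pc n S j then k else 0))"
    if "i < n" "j < n" "S i j = Pm" for i j E k s
  proof -
    have nz: "S i j \<noteq> Zm" using that by auto
    note tr = T1[OF that(1,2) nz] nfj[OF that(2)]
    have pj: "pc n S j" using that unfolding pc_def by auto
    let ?M = "Ps n S j s + (if pc n S j then k else 0)"
    have "Xs n S i s \<le> Ps n S j s"
      using tr_Xp[where L=S and R=S and i=i and j=j and f="S i j", OF tr that(3)] .
    hence "Xs n S i s \<le> Fb E ?M" using Fb_ge[of ?M E] by linarith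
    moreover have "Fb E (Ws n S i s) \<le> Fb E ?M"
      using tr_Wp[where L=S and R=S and i=i and j=j and f="S i j", OF tr that(3), of s] Fb_mono by fastforce
    moreover have "Ps n S i s + (if pc n S i then k else 0) \<le> ?M"
      using tr_P[where L=S and R=S and i=i and j=j and f="S i j", OF tr, of s] pj by auto
    hence "Fb E (Ps n S i s + (if pc n S i then k else 0)) \<le> Fb E ?M"
      using Fb_mono by fastforce
    ultimately show ?thesis unfolding Bk_def by (simp add: max_def split: if_splits)
  qed
  have Q: "\<exists>E. \<forall>k s t. execn c k s t \<longrightarrow> (\<forall>j<n. card (D j) \<le> m \<longrightarrow> t j \<le> Bk n S E k j s)" for m
  proof (induction m)
    case 0
    have "card (D j) \<noteq> 0" if "j < n" for j
    proof -
      have "j \<in> D j" using diag that unfolding D_def by auto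
      thus ?thesis using finD by (auto simp: card_eq_0_iff)
    qed
    thus ?case by (intro exI[of _ 0]) force
  next
    case (Suc m)
    then obtain E0 where E0: "\<forall>k s t. execn c k s t \<longrightarrow> (\<forall>j<n. card (D j) \<le> m \<longrightarrow> t j \<le> Bk n S E0 k j s)"
      by blast
    define G where "G = E0 + 2 * n + d * (E0 + 2 * n + 1)"
    define E where "E = G + 2"
    have "execn c k s t \<longrightarrow> (\<forall>j<n. card (D j) \<le> Suc m \<longrightarrow> t j \<le> Bk n S E k j s)" for k s t
    proof (induction k arbitrary: t)
      case 0
      show ?case
      proof (intro impI allI)
        fix j assume "execn c 0 s t" "j < n" "card (D j) \<le> Suc m"
        hence "t = s" "j < n" by (auto elim: execn0E)
        hence "t j \<le> Xs n S j s" using Xs_ge[of j n S j s] diag by auto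
        thus "t j \<le> Bk n S E 0 j s" unfolding Bk_def by (simp add: le_max_iff_disj)
      qed
    next
      case (Suc k u)
      show ?case
      proof (intro impI allI)
        fix j assume ex: "execn c (Suc k) s u" and jj: "j < n" "card (D j) \<le> Suc m"
        then obtain t where t: "execn c k s t" "exec c t u" using execn_snoc by blast
        have j: "j < n" and cj: "card (D j) \<le> Suc m" using jj by auto
        let ?X = "Xs n S j s" and ?W = "Ws n S j s" and ?P = "Ps n S j s"
          and ?K = "if pc n S j then k else 0"
        have IHt: "t i \<le> Bk n S E k i s" if "i < n" "card (D i) \<le> Suc m" for i
          using Suc.IH t that by blast
        have low: "t i \<le> Bk n S E0 k i s" if "i < n" "Wm \<le> S i j" for i
          using E0 t(1) that T2[OF that(1) j that(2)] cj by auto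
        have X: "Xs n S j t \<le> max ?X (Fb E ?W) + Fb E (?P + ?K)"
        proof (rule Xs_le)
          fix i assume i: "i < n" "S i j = Mm"
          have sub: "D i \<subseteq> D j"
          proof
            fix i' assume "i' \<in> D i"
            hence "i' < n" "S i' i \<noteq> Zm" unfolding D_def by auto
            hence "S i' i \<le> S i' j" using T1[OF i(1) j] i by (auto simp: le_max_iff_disj)
            thus "i' \<in> D j" using \<open>i' \<in> D i\<close> unfolding D_def by auto
          qed
          have "card (D i) \<le> Suc m" using card_mono[OF finD sub] cj by simp
          hence "t i \<le> Bk n S E k i s" using IHt i by auto
          also have "\<dots> \<le> Bk n S E k j s" using B1[OF i(1) j] i by auto
          finally show "t i \<le> max ?X (Fb E ?W) + Fb E (?P + ?K)" unfolding Bk_def .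
        qed
        have W: "Ws n S j t \<le> n * (2 * Fb E0 (max ?W (?P + ?K)))"
          unfolding Ws_def[of n S j t]
        proof (rule sum_le_card)
          fix i assume "i \<in> {i. i < n \<and> (S i j = Wm \<or> S i j = Pm)}"
          hence i: "i < n" "Wm \<le> S i j" by auto
          have "t i \<le> Bk n S E0 k i s" using low i by auto
          also have "\<dots> \<le> 2 * Fb E0 (max ?W (?P + ?K))" using B2[OF i(1) j i(2)] .
          finally show "t i \<le> 2 * Fb E0 (max ?W (?P + ?K))" .
        qed auto
        have P: "Ps n S j t \<le> n * (2 * Fb E0 (?P + ?K))"
          unfolding Ps_def[of n S j t]
        proof (rule sum_le_card)
          fix i assume "i \<in> {i. i < n \<and> S i j = Pm}"
          hence i: "i < n" "S i j = Pm" by auto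
          have "t i \<le> Bk n S E0 k i s" using low i by auto
          also have "\<dots> \<le> 2 * Fb E0 (?P + ?K)" using B3[OF i(1) j i(2)] .
          finally show "t i \<le> 2 * Fb E0 (?P + ?K)" .
        qed auto
        have "u j \<le> bnd n S d j t" using step t(2) j by blast
        also have "\<dots> \<le> max ?X (Fb E ?W) + Fb E (?P + (if pc n S j then Suc k else 0))"
          unfolding bnd_def
          by (rule iter_arith[OF X W P G_def E_def, where b="pc n S j"]) (auto simp: Ps_nopc)
        finally show "u j \<le> Bk n S E (Suc k) j s" unfolding Bk_def .
      qed
    qed
    thus ?case by blast
  qed
  obtain E where E: "\<forall>k s t. execn c k s t \<longrightarrow> (\<forall>j<n. card (D j) \<le> n \<longrightarrow> t j \<le> Bk n S E k j s)"
    using Q by blast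
  have "card (D j) \<le> n" for j
  proof -
    have "D j \<subseteq> {..<n}" unfolding D_def by auto
    thus ?thesis using card_mono[of "{..<n}" "D j"] by simp
  qed
  thus ?thesis using E by blast
qed


section \<open>Closure facts\<close>

lemma mmul_Mm_right[simp]: "mmul x Mm = x"
  by (cases x; simp add: mmul_def max_def)

lemma star_ge_pow: "mat_pow n M k i j a \<le> mat_star n M i j a"
  unfolding mat_star_def by (rule Max_ge) auto

lemma star_attained: "\<exists>k. mat_star n M i j a = mat_pow n M k i j a"
proof -
  have "mat_star n M i j a \<in> range (\<lambda>k. mat_pow n M k i j a)"
    unfolding mat_star_def by (rule Max_in) auto
  thus ?thesis by auto
qed

lemma pow1_ge: "i < n \<Longrightarrow> M i j a \<le> mat_pow n M 1 i j a"
proof -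
  assume i: "i < n"
  have "mmul (unit_mat i i a) (M i j a) \<in> set (map (\<lambda>k. mmul (unit_mat i k a) (M k j a)) [0..<n])"
    using i by auto
  hence "mmul (unit_mat i i a) (M i j a) \<le> mat_pow n M 1 i j a"
    by (simp add: mat_mul_def msum_ge)
  thus ?thesis by (simp add: unit_mat_def)
qed

lemma star_ge: "i < n \<Longrightarrow> M i j a \<le> mat_star n M i j a"
  using pow1_ge star_ge_pow order_trans by metis

lemma pow_comp:
  assumes nf: "\<forall>k i j. i < n \<longrightarrow> j < n \<longrightarrow> mat_pow n M k i j a \<noteq> Infm"
    and i: "i < n" and k: "k < n"
  shows "j < n \<Longrightarrow> mmul (mat_pow n M x i k a) (mat_pow n M y k j a) \<le> mat_pow n M (x + y) i j a"
proof (induction y arbitrary: j)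
  case 0
  show ?case
  proof (cases "k = j")
    case True thus ?thesis by (simp add: unit_mat_def)
  next
    case False
    have "mat_pow n M x i k a \<noteq> Infm" using nf i k by auto
    thus ?thesis using False by (simp add: unit_mat_def)
  qed
next
  case (Suc y)
  let ?xs = "map (\<lambda>m. mmul (mat_pow n M y k m a) (M m j a)) [0..<n]"
  have eq: "mat_pow n M (Suc y) k j a = msum ?xs" by (simp add: mat_mul_def)
  from msum_in[of ?xs] show ?case
  proof
    assume "msum ?xs = Zm"
    moreover have "mat_pow n M x i k a \<noteq> Infm" using nf i k by auto
    ultimately show ?thesis using eq by simp
  next
    assume "msum ?xs \<in> set ?xs"
    then obtain m where m: "m < n" "msum ?xs = mmul (mat_pow n M y k m a) (M m j a)" by auto
    have "mmul (mat_pow n M x i k a) (mat_pow n M (Suc y) k j a)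
        = mmul (mmul (mat_pow n M x i k a) (mat_pow n M y k m a)) (M m j a)"
      using eq m by (simp add: mmul_assoc)
    also have "\<dots> \<le> mmul (mat_pow n M (x + y) i m a) (M m j a)"
      by (rule mmul_mono[OF Suc.IH[OF m(1)] order_refl])
    also have "\<dots> \<le> mat_pow n M (x + Suc y) i j a"
      using m(1) by (simp add: mat_mul_def msum_ge)
    finally show ?thesis .
  qed
qed

lemma star_trans:
  assumes nf: "inff n (\<lambda>i j. mat_star n M i j a)"
  shows "\<forall>i k j. i < n \<longrightarrow> k < n \<longrightarrow> j < n \<longrightarrow>
           mmul (mat_star n M i k a) (mat_star n M k j a) \<le> mat_star n M i j a"
proof (intro allI impI)
  fix i k j assume ijk: "i < n" "k < n" "j < n"
  have nfp: "\<forall>k i j. i < n \<longrightarrow> j < n \<longrightarrow> mat_pow n M k i j a \<noteq> Infm"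
  proof (intro allI impI notI)
    fix k i j assume "i < n" "j < n" "mat_pow n M k i j a = Infm"
    hence "mat_star n M i j a = Infm" using star_ge_pow[of n M k i j a] by simp
    thus False using nf \<open>i < n\<close> \<open>j < n\<close> unfolding inff_def by auto
  qed
  obtain x where x: "mat_star n M i k a = mat_pow n M x i k a" using star_attained by blast
  obtain y where y: "mat_star n M k j a = mat_pow n M y k j a" using star_attained by blast
  have "mmul (mat_star n M i k a) (mat_star n M k j a) \<le> mat_pow n M (x + y) i j a"
    unfolding x y by (rule pow_comp[OF nfp ijk])
  also have "\<dots> \<le> mat_star n M i j a" by (rule star_ge_pow)
  finally show "mmul (mat_star n M i k a) (mat_star n M k j a) \<le> mat_star n M i j a" .
qed



section \<open>Assignments\<close>

lemma max_Zm[simp]: "max Zm x = x" "max x Zm = x"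
  by (simp_all add: max_def)

lemma EAvec:
  assumes "a k \<in> {0,1,2}"
  shows "vec_add (scal_vec (delta 0 k) (vpair i Mm j Pm))
       (vec_add (scal_vec (delta 1 k) (vpair i Pm j Mm))
                (scal_vec (delta 2 k) (vpair i Wm j Wm))) r a
   = (if a k = 0 then vpair i Mm j Pm r a else if a k = 1 then vpair i Pm j Mm r a else vpair i Wm j Wm r a)"
proof -
  have nf: "vpair i x j y r a \<noteq> Infm" if "x \<noteq> Infm" "y \<noteq> Infm" for x y
    using that by (simp add: vpair_def vsingle_def madd_def max_def)
  show ?thesis using assms nf
    by (auto simp: vec_add_def scal_vec_def delta_def madd_def)
qed

lemma bnd_parts: "Xs n L j s \<le> bnd n L d j s" "Fb d (Ws n L j s) \<le> bnd n L d j s"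
  "Xs n L j s + Fb d (Ps n L j s) \<le> bnd n L d j s" "Fb d (Ps n L j s) \<le> bnd n L d j s"
  unfolding bnd_def by auto

lemma two_Fb: "x + x \<le> Fb 1 x"
  unfolding Fb_def by simp

lemma H_mp: "i < n \<Longrightarrow> j' < n \<Longrightarrow> L i j = Mm \<Longrightarrow> L j' j = Pm \<Longrightarrow> s i + s j' \<le> bnd n L 1 j s"
  using Xs_ge[of i n L j s] Ps_ge[of j' n L j s] Fb_ge[of "Ps n L j s" 1] bnd_parts(3)[of n L j s 1]
  by linarith

lemma H_pp: "i < n \<Longrightarrow> L i j = Pm \<Longrightarrow> s i + s i \<le> bnd n L 1 j s"
  using Ps_ge[of i n L j s] two_Fb[of "s i"] Fb_mono[of "s i" "Ps n L j s" 1 1] bnd_parts(4)[of 1 n L j s]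
  by linarith

lemma H_w: "i < n \<Longrightarrow> L i j = Wm \<Longrightarrow> s i + s i \<le> bnd n L 1 j s"
  using Ws_ge[of i n L j s] two_Fb[of "s i"] Fb_mono[of "s i" "Ws n L j s" 1 1] bnd_parts(2)[of 1 n L j s]
  by linarith

lemma H_ww: "i < n \<Longrightarrow> j' < n \<Longrightarrow> i \<noteq> j' \<Longrightarrow> L i j = Wm \<Longrightarrow> L j' j = Wm \<Longrightarrow> s i + s j' \<le> bnd n L 1 j s"
proof -
  assume a: "i < n" "j' < n" "i \<noteq> j'" "L i j = Wm" "L j' j = Wm"
  have "sum s {i, j'} \<le> Ws n L j s" unfolding Ws_def by (rule sum_mono2) (use a in auto)
  hence "s i + s j' \<le> Ws n L j s" using a by simp
  thus ?thesis using Fb_ge[of "Ws n L j s" 1] bnd_parts(2)[of 1 n L j s] by linarith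
qed

lemma H_mul: "i < n \<Longrightarrow> j' < n \<Longrightarrow> L i j = Wm \<Longrightarrow> L j' j = Wm \<Longrightarrow> s i * s j' \<le> bnd n L 1 j s"
proof -
  assume a: "i < n" "j' < n" "L i j = Wm" "L j' j = Wm"
  let ?W = "Ws n L j s"
  have "s i \<le> ?W" "s j' \<le> ?W" using Ws_ge a by blast+
  hence "s i * s j' \<le> ?W * ?W" by (rule mult_le_mono)
  also have "\<dots> \<le> Fb 1 ?W" unfolding Fb_def by simp
  finally show ?thesis using bnd_parts(2)[of 1 n L j s] by linarith
qed

lemma etyp_bound:
  assumes "etyp n e K Wv" "\<forall>k\<in>K. a k \<in> {0,1,2}" "\<forall>r<n. L r j = Wv r a"
  shows "aval e s \<le> bnd n L 1 j s"
  using assms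
proof (induction rule: etyp.induct)
  case (ES i n)
  have "L i j = Mm" using ES by (simp add: vsingle_def)
  thus ?case using var_le_bnd[of i n L j s 1] ES by simp
next
  case (EM i n j')
  have "L i j = Wm" "L j' j = Wm" using EM by (auto simp: vpair_def vsingle_def madd_def)
  thus ?case using H_mul EM by simp
next
  case (EA_sub i n j' k)
  have ak: "a k \<in> {0,1,2}" using EA_sub by auto
  have Lr: "\<forall>r<n. L r j = (if a k = 0 then vpair i Mm j' Pm r a else if a k = 1 then vpair i Pm j' Mm r a else vpair i Wm j' Wm r a)"
    using EA_sub(4) EAvec[where a=a and k=k and i=i and j=j', OF ak] by simp
  have "L i j \<noteq> Zm" "L i j \<noteq> Infm" using Lr EA_sub(1)
    by (auto simp: vpair_def vsingle_def madd_def max_def)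
  hence "s i \<le> bnd n L 1 j s" using var_le_bnd[of i n L j s 1] EA_sub(1) by simp
  thus ?case by simp
next
  case (EA_plus i n j' k)
  have ak: "a k \<in> {0,1,2}" using EA_plus by auto
  have Lr: "\<forall>r<n. L r j = (if a k = 0 then vpair i Mm j' Pm r a else if a k = 1 then vpair i Pm j' Mm r a else vpair i Wm j' Wm r a)"
    using EA_plus(4) EAvec[where a=a and k=k and i=i and j=j', OF ak] by simp
  have Li: "L i j = (if a k = 0 then (if i = j' then Pm else Mm) else if a k = 1 then Pm else Wm)"
    using Lr EA_plus(1) by (auto simp: vpair_def vsingle_def madd_def max_def)
  have Lj: "L j' j = (if a k = 0 then Pm else if a k = 1 then (if i = j' then Pm else Mm) else Wm)"
    using Lr EA_plus(2) by (auto simp: vpair_def vsingle_def madd_def max_def)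
  show ?case
  proof (cases "i = j'")
    case True
    thus ?thesis using Li EA_plus(1) H_pp[of i n L j s] H_w[of i n L j s] by (auto split: if_splits)
  next
    case False
    thus ?thesis using Li Lj EA_plus(1,2) H_mp[of i n j' L j s] H_mp[of j' n i L j s]
        H_ww[of i n j' L j s] by (auto split: if_splits)
  qed
qed


section \<open>Soundness\<close>

inductive_cases AssignE: "exec (Assign x e) s t"
inductive_cases SeqE: "exec (Seq c1 c2) s u"
inductive_cases IfE: "exec (If b c1 c2) s t"
inductive_cases LoopE: "exec (Loop x c) s t"

lemma exec_while: "exec w s t \<Longrightarrow> w = While b c \<Longrightarrow> \<exists>k. execn c k s t"
proof (induction rule: exec_execn.inducts(1)[where ?P2.0="\<lambda>_ _ _ _. True"])
  case (WhileF b s C)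
  thus ?case by (blast intro: Defs.exec_execn.N0)
next
  case (WhileT b s C t u)
  thus ?case by (blast intro: Defs.exec_execn.NSuc)
qed auto

lemma inff_mono: "(\<And>i j. i < n \<Longrightarrow> j < n \<Longrightarrow> A i j \<le> B i j) \<Longrightarrow> inff n B \<Longrightarrow> inff n A"
  unfolding inff_def by (metis mwp_le_simps(4))

lemma final_transfer:
  fixes S R :: "nat \<Rightarrow> nat \<Rightarrow> mwp"
  assumes tr: "\<forall>i'<n. S i' j \<noteq> Zm \<longrightarrow> max Zm (S i' j) \<le> R i' j"
    and nf: "\<forall>i'<n. R i' j \<noteq> Infm" and hk: "K \<le> Ps n R j s"
  shows "max (Xs n S j s) (Fb E (Ws n S j s)) + Fb E (Ps n S j s + K) \<le> bnd n R (2 + E * 3) j s"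
proof -
  let ?E = "2 + E * 3"
  have X: "Xs n S j s \<le> max (Xs n R j s) (Ws n R j s)"
    using tr_X[where L=S and R=R and i=j and j=j and f=Zm, OF tr nf] .
  have W: "Ws n S j s \<le> Ws n R j s"
    using tr_W[where L=S and R=R and i=j and j=j and f=Zm, OF tr nf] .
  have P: "Ps n S j s \<le> Ps n R j s"
    using tr_P[where L=S and R=R and i=j and j=j and f=Zm, OF tr nf] .
  have EE: "E \<le> ?E" by simp
  have FW: "Fb E (Ws n S j s) \<le> Fb ?E (Ws n R j s)" using Fb_mono[OF W EE] .
  have "Ws n R j s \<le> Fb ?E (Ws n R j s)" by (rule Fb_ge)
  hence XX: "max (Xs n S j s) (Fb E (Ws n S j s)) \<le> max (Xs n R j s) (Fb ?E (Ws n R j s))"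
    using X FW by (simp add: max_def split: if_splits)
  have "Ps n S j s + K \<le> 2 * Fb 0 (Ps n R j s)" using P hk unfolding Fb_def by simp
  also have "\<dots> \<le> Fb 2 (Ps n R j s)" using Fb_scale[of 2 0 "Ps n R j s"] by (simp only: add_0)
  finally have h: "Ps n S j s + K \<le> Fb 2 (Ps n R j s)" .
  have "Fb E (Ps n S j s + K) \<le> Fb E (Fb 2 (Ps n R j s))" using Fb_mono[OF h order_refl] .
  also have "\<dots> \<le> Fb ?E (Ps n R j s)" using Fb_comp[of E 2 "Ps n R j s"] by simp
  finally have P2: "Fb E (Ps n S j s + K) \<le> Fb ?E (Ps n R j s)" .
  show ?thesis unfolding bnd_def by (rule add_mono[OF XX P2])
qed

lemma loop_step_sem:
  fixes L S :: "nat \<Rightarrow> nat \<Rightarrow> mwp"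
  assumes LS: "\<And>i j. i < n \<Longrightarrow> L i j \<le> S i j" and nfS: "inff n S" and diag: "\<forall>j<n. S j j = Mm"
    and trans: "\<forall>i k j. i < n \<longrightarrow> k < n \<longrightarrow> j < n \<longrightarrow> mmul (S i k) (S k j) \<le> S i j"
    and semL: "sem n c L"
  shows "\<exists>E. \<forall>k s t. execn c k s t \<longrightarrow> (\<forall>j<n. t j \<le> Bk n S E k j s)"
proof -
  obtain d where d: "\<forall>s t. exec c s t \<longrightarrow> (\<forall>j<n. t j \<le> bnd n L d j s)"
    using semL unfolding sem_def by blast
  have step: "\<forall>s t. exec c s t \<longrightarrow> (\<forall>j<n. t j \<le> bnd n S d j s)"
  proof (intro allI impI)
    fix s t j assume e: "exec c s t" and j: "j < n"
    have tr: "\<forall>i'<n. L i' j \<noteq> Zm \<longrightarrow> max Zm (L i' j) \<le> S i' j" using LS by simp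
    have nf: "\<forall>i'<n. S i' j \<noteq> Infm" using nfS j unfolding inff_def by auto
    have "t j \<le> bnd n L d j s" using d e j by blast
    also have "\<dots> \<le> bnd n S d j s"
      using tr_bnd[where L=L and R=S and i=j and j=j and f=Zm, OF tr nf] .
    finally show "t j \<le> bnd n S d j s" .
  qed
  show ?thesis by (rule iteration[OF nfS diag trans step])
qed

lemma sound:
  "ctyp n c K M \<Longrightarrow> (\<forall>k\<in>K. a k \<in> {0,1,2}) \<Longrightarrow> inff n (\<lambda>i j. M i j a) \<Longrightarrow> sem n c (\<lambda>i j. M i j a)"
proof (induction rule: ctyp.induct)
  case (A j n e K Wv)
  show ?case unfolding sem_def
  proof (intro exI[of _ 1] allI impI)
    fix s t c' assume e: "exec (Assign j e) s t" and c': "c' < n"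
    hence t: "t = s(j := aval e s)" by (auto elim: AssignE)
    show "t c' \<le> bnd n (\<lambda>i j'. col_replace j Wv i j' a) 1 c' s"
    proof (cases "c' = j")
      case True
      have "aval e s \<le> bnd n (\<lambda>i j'. col_replace j Wv i j' a) 1 j s"
        by (rule etyp_bound[OF A(2) A(3)]) (simp add: col_replace_def)
      thus ?thesis using True t by simp
    next
      case False
      have "s c' \<le> bnd n (\<lambda>i j'. col_replace j Wv i j' a) 1 c' s"
        by (rule var_le_bnd) (use c' False in \<open>auto simp: col_replace_def unit_mat_def\<close>)
      thus ?thesis using False t by simp
    qed
  qed
next
  case (C n C1 K1 M1 C2 K2 M2)
  let ?L1 = "\<lambda>i j. M1 i j a" and ?L2 = "\<lambda>i j. M2 i j a"
  have Neq: "(\<lambda>i j. mat_mul n M1 M2 i j a) = (\<lambda>i j. msum (map (\<lambda>k. mmul (?L1 i k) (?L2 k j)) [0..<n]))"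
    by (simp add: mat_mul_def fun_eq_iff)
  have nfN: "inff n (\<lambda>i j. msum (map (\<lambda>k. mmul (?L1 i k) (?L2 k j)) [0..<n]))"
    using C.prems(2) Neq by simp
  have nf1: "inff n ?L1" unfolding inff_def
  proof (intro allI impI notI)
    fix i k assume ik: "i < n" "k < n" "M1 i k a = Infm"
    have "mmul (?L1 i k) (?L2 k k) \<le> msum (map (\<lambda>m. mmul (?L1 i m) (?L2 m k)) [0..<n])"
      by (rule msum_ge_map[where f="\<lambda>m. mmul (?L1 i m) (?L2 m k)"]) (use ik in simp)
    thus False using ik nfN unfolding inff_def by auto
  qed
  have nf2: "inff n ?L2" unfolding inff_def
  proof (intro allI impI notI)
    fix k j assume kj: "k < n" "j < n" "M2 k j a = Infm"
    have "mmul (?L1 k k) (?L2 k j) \<le> msum (map (\<lambda>m. mmul (?L1 k m) (?L2 m j)) [0..<n])"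
      by (rule msum_ge_map[where f="\<lambda>m. mmul (?L1 k m) (?L2 m j)"]) (use kj in simp)
    thus False using kj nfN unfolding inff_def by auto
  qed
  obtain d1 where d1: "\<forall>s t. exec C1 s t \<longrightarrow> (\<forall>j<n. t j \<le> bnd n ?L1 d1 j s)"
    using C.IH(1) C.prems(1) nf1 unfolding sem_def by blast
  obtain d2 where d2: "\<forall>s t. exec C2 s t \<longrightarrow> (\<forall>j<n. t j \<le> bnd n ?L2 d2 j s)"
    using C.IH(2) C.prems(1) nf2 unfolding sem_def by blast
  show ?case unfolding sem_def Neq
  proof (intro exI allI impI)
    fix s u j assume e: "exec (Seq C1 C2) s u" and j: "j < n"
    then obtain t where t: "exec C1 s t" "exec C2 t u" by (auto elim: SeqE)
    show "u j \<le> bnd n (\<lambda>i j. msum (map (\<lambda>k. mmul (?L1 i k) (?L2 k j)) [0..<n]))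
                 (d1 + 2 * n + d2 * (d1 + 2 * n + 1) + 1) j s"
    proof -
      have h1: "\<forall>k<n. t k \<le> bnd n ?L1 d1 k s" using d1 t by blast
      have h2: "\<forall>j<n. u j \<le> bnd n ?L2 d2 j t" using d2 t by blast
      show ?thesis by (rule seq_bound[OF nfN h1 h2 j])
    qed
  qed
next
  case (I n C1 K1 M1 C2 K2 M2 b)
  let ?L1 = "\<lambda>i j. M1 i j a" and ?L2 = "\<lambda>i j. M2 i j a" and ?N = "\<lambda>i j. mat_add M1 M2 i j a"
  have le1: "?L1 i j \<le> ?N i j" and le2: "?L2 i j \<le> ?N i j" for i j
    by (simp_all add: mat_add_def madd_def)
  have nf1: "inff n ?L1" by (rule inff_mono[OF le1 I.prems(2)])
  have nf2: "inff n ?L2" by (rule inff_mono[OF le2 I.prems(2)])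
  obtain d1 where d1: "\<forall>s t. exec C1 s t \<longrightarrow> (\<forall>j<n. t j \<le> bnd n ?L1 d1 j s)"
    using I.IH(1) I.prems(1) nf1 unfolding sem_def by blast
  obtain d2 where d2: "\<forall>s t. exec C2 s t \<longrightarrow> (\<forall>j<n. t j \<le> bnd n ?L2 d2 j s)"
    using I.IH(2) I.prems(1) nf2 unfolding sem_def by blast
  show ?case unfolding sem_def
  proof (intro exI[of _ "max d1 d2"] allI impI)
    fix s t j assume e: "exec (If b C1 C2) s t" and j: "j < n"
    have nf: "\<forall>i'<n. ?N i' j \<noteq> Infm" using I.prems(2) j unfolding inff_def by auto
    from e consider (c1) "exec C1 s t" | (c2) "exec C2 s t" by (auto elim: IfE)
    thus "t j \<le> bnd n ?N (max d1 d2) j s"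
    proof cases
      case c1
      have "t j \<le> bnd n ?L1 d1 j s" using d1 c1 j by blast
      also have "\<dots> \<le> bnd n ?N d1 j s"
        by (rule tr_bnd[where f=Zm]) (use le1 nf in auto)
      also have "\<dots> \<le> bnd n ?N (max d1 d2) j s" by (rule bnd_mono_d) simp
      finally show ?thesis .
    next
      case c2
      have "t j \<le> bnd n ?L2 d2 j s" using d2 c2 j by blast
      also have "\<dots> \<le> bnd n ?N d2 j s"
        by (rule tr_bnd[where f=Zm]) (use le2 nf in auto)
      also have "\<dots> \<le> bnd n ?N (max d1 d2) j s" by (rule bnd_mono_d) simp
      finally show ?thesis .
    qed
  qed
next
  case (L l n C K M)
  let ?L = "\<lambda>i j. M i j a" and ?S = "\<lambda>i j. mat_star n M i j a" and ?R = "\<lambda>i j. loop_mat n l M i j a"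
  have Req: "?R i j = max (?S i j) (max (if i = j \<and> ?S j j \<noteq> Mm then Infm else Zm)
                (if i = l \<and> pc n ?S j then Pm else Zm))" for i j
    by (simp add: loop_mat_def Let_def madd_def pc_def)
  have nfR: "\<forall>i<n. \<forall>j<n. ?R i j \<noteq> Infm" using L.prems(2) unfolding inff_def .
  have SR: "?S i j \<le> ?R i j" for i j using Req[of i j] by simp
  have nfS: "inff n ?S" by (rule inff_mono[OF SR]) (use nfR in \<open>simp add: inff_def\<close>)
  have diag: "\<forall>j<n. ?S j j = Mm"
  proof (intro allI impI)
    fix j assume j: "j < n"
    show "?S j j = Mm"
    proof (rule ccontr)
      assume "?S j j \<noteq> Mm"
      hence "?R j j = Infm" using Req[of j j] by simp
      thus False using nfR j by auto
    qed
  qed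
  have nfL: "inff n ?L" by (rule inff_mono[OF star_ge nfS])
  have semL: "sem n C ?L" using L.IH L.prems(1) nfL by blast
  have trans: "\<forall>i k j. i < n \<longrightarrow> k < n \<longrightarrow> j < n \<longrightarrow> mmul (?S i k) (?S k j) \<le> ?S i j"
    using star_trans[of n M a] nfS by simp
  have LS: "\<And>i j. i < n \<Longrightarrow> ?L i j \<le> ?S i j" by (rule star_ge)
  obtain E where E: "\<forall>k s t. execn C k s t \<longrightarrow> (\<forall>j<n. t j \<le> Bk n ?S E k j s)"
    using loop_step_sem[where L="?L" and S="?S" and n=n and c=C, OF LS nfS diag trans semL] by blast
  show ?case unfolding sem_def
  proof (intro exI[of _ "2 + E * 3"] allI impI)
    fix s t j assume e: "exec (Loop l C) s t" and j: "j < n"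
    have ex: "execn C (s l) s t" using e by (auto elim: LoopE)
    have nf: "\<forall>i'<n. ?R i' j \<noteq> Infm" using nfR j by auto
    have hk: "(if pc n ?S j then s l else 0) \<le> Ps n ?R j s"
    proof (cases "pc n ?S j")
      case True
      have "Pm \<le> ?R l j" using Req[of l j] True by (simp add: le_max_iff_disj)
      hence "?R l j = Pm" using nf L(1) by (cases "?R l j") (auto simp: less_eq_mwp_def)
      thus ?thesis using True Ps_ge[of l n ?R j s] L(1) by simp
    qed simp
    have "t j \<le> Bk n ?S E (s l) j s" using E ex j by blast
    also have "\<dots> \<le> bnd n ?R (2 + E * 3) j s" unfolding Bk_def
      by (rule final_transfer[OF _ nf hk]) (use SR in simp)
    finally show "t j \<le> bnd n ?R (2 + E * 3) j s" .
  qed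
next
  case (W n C K M b)
  let ?L = "\<lambda>i j. M i j a" and ?S = "\<lambda>i j. mat_star n M i j a" and ?R = "\<lambda>i j. while_mat n M i j a"
  have Req: "?R i j = max (?S i j) (max (if i = j \<and> ?S j j \<noteq> Mm then Infm else Zm)
                (if ?S i j = Pm then Infm else Zm))" for i j
    by (simp add: while_mat_def Let_def madd_def)
  have nfR: "\<forall>i<n. \<forall>j<n. ?R i j \<noteq> Infm" using W.prems(2) unfolding inff_def .
  have SR: "?S i j \<le> ?R i j" for i j using Req[of i j] by simp
  have nfS: "inff n ?S" by (rule inff_mono[OF SR]) (use nfR in \<open>simp add: inff_def\<close>)
  have diag: "\<forall>j<n. ?S j j = Mm"
  proof (intro allI impI)
    fix j assume j: "j < n"
    show "?S j j = Mm"
    proof (rule ccontr)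
      assume "?S j j \<noteq> Mm"
      hence "?R j j = Infm" using Req[of j j] by simp
      thus False using nfR j by auto
    qed
  qed
  have nopc: "\<not> pc n ?S j" if "j < n" for j
  proof
    assume "pc n ?S j"
    then obtain i where i: "i < n" "?S i j = Pm" unfolding pc_def by blast
    hence "?R i j = Infm" using Req[of i j] by simp
    thus False using nfR i that by auto
  qed
  have nfL: "inff n ?L" by (rule inff_mono[OF star_ge nfS])
  have semL: "sem n C ?L" using W.IH W.prems(1) nfL by blast
  have trans: "\<forall>i k j. i < n \<longrightarrow> k < n \<longrightarrow> j < n \<longrightarrow> mmul (?S i k) (?S k j) \<le> ?S i j"
    using star_trans[of n M a] nfS by simp
  have LS: "\<And>i j. i < n \<Longrightarrow> ?L i j \<le> ?S i j" by (rule star_ge)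
  obtain E where E: "\<forall>k s t. execn C k s t \<longrightarrow> (\<forall>j<n. t j \<le> Bk n ?S E k j s)"
    using loop_step_sem[where L="?L" and S="?S" and n=n and c=C, OF LS nfS diag trans semL] by blast
  show ?case unfolding sem_def
  proof (intro exI[of _ "2 + E * 3"] allI impI)
    fix s t j assume e: "exec (While b C) s t" and j: "j < n"
    obtain k where ex: "execn C k s t" using exec_while[OF e refl] by blast
    have nf: "\<forall>i'<n. ?R i' j \<noteq> Infm" using nfR j by auto
    have "t j \<le> Bk n ?S E k j s" using E ex j by blast
    also have "\<dots> = max (Xs n ?S j s) (Fb E (Ws n ?S j s)) + Fb E (Ps n ?S j s + 0)"
      unfolding Bk_def using nopc[OF j] by simp
    also have "\<dots> \<le> bnd n ?R (2 + E * 3) j s"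
      by (rule final_transfer[where S="?S" and R="?R" and n=n and j=j, OF _ nf]) (use SR in simp_all)
    finally show "t j \<le> bnd n ?R (2 + E * 3) j s" .
  qed
qed



lemma polys_sum: "m \<le> n \<Longrightarrow> (\<lambda>s. \<Sum>i<m. s i) \<in> polys n"
proof (induction m)
  case 0
  show ?case using polys.const[of 0 n] by simp
next
  case (Suc m)
  have "(\<lambda>s. (\<Sum>i<m. s i) + s m) \<in> polys n"
    by (rule polys.add) (use Suc in \<open>auto intro: polys.var\<close>)
  thus ?case by simp
qed

lemma polys_pow: "q \<in> polys n \<Longrightarrow> (\<lambda>s. q s ^ d) \<in> polys n"
proof (induction d)
  case 0
  show ?case using polys.const[of 1 n] by simp
next
  case (Suc d)
  have "(\<lambda>s. q s * q s ^ d) \<in> polys n" by (rule polys.mul) (use Suc in auto)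
  thus ?case by simp
qed

lemma bnd_total: "bnd n L d j s \<le> 2 * Fb d (\<Sum>i<n. s i)"
proof -
  let ?T = "\<Sum>i<n. s i"
  have X: "Xs n L j s \<le> ?T" by (rule Xs_le) (rule member_le_sum, auto)
  have W: "Ws n L j s \<le> ?T" unfolding Ws_def by (rule sum_mono2) auto
  have P: "Ps n L j s \<le> ?T" unfolding Ps_def by (rule sum_mono2) auto
  have "Xs n L j s \<le> Fb d ?T" using X Fb_ge[of ?T d] by linarith
  moreover have "Fb d (Ws n L j s) \<le> Fb d ?T" using Fb_mono[OF W order_refl] .
  moreover have "Fb d (Ps n L j s) \<le> Fb d ?T" using Fb_mono[OF P order_refl] .
  ultimately show ?thesis unfolding bnd_def by simp
qed


theorem corollary11:
  fixes n p :: nat and P :: cmd and M :: mat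
  assumes "ctyp n P {1..p} M"
    and "\<exists>a::choice. (\<forall>k\<in>{1..p}. a k \<in> {0,1,2}) \<and> (\<forall>i<n. \<forall>j<n. M i j a \<noteq> Infm)"
  shows "\<exists>q \<in> polys n. \<forall>s s'. exec P s s' \<longrightarrow> (\<forall>j<n. s' j \<le> q s)"
proof -
  obtain a :: choice where a1: "\<forall>k\<in>{1..p}. a k \<in> {0,1,2}" and a2: "\<forall>i<n. \<forall>j<n. M i j a \<noteq> Infm"
    using assms(2) by blast
  have "sem n P (\<lambda>i j. M i j a)"
    by (rule sound[OF assms(1) a1]) (use a2 in \<open>simp add: inff_def\<close>)
  then obtain d where d: "\<forall>s t. exec P s t \<longrightarrow> (\<forall>j<n. t j \<le> bnd n (\<lambda>i j. M i j a) d j s)"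
    unfolding sem_def by blast
  let ?T = "\<lambda>s::store. \<Sum>i<n. s i"
  have T: "?T \<in> polys n" by (rule polys_sum) simp
  have q: "(\<lambda>s. 2 * (?T s * (2 + ?T s) ^ d)) \<in> polys n"
  proof (rule polys.mul)
    show "(\<lambda>s. 2) \<in> polys n" by (rule polys.const)
    show "(\<lambda>s. ?T s * (2 + ?T s) ^ d) \<in> polys n"
    proof (rule polys.mul[OF T])
      have "(\<lambda>s. 2 + ?T s) \<in> polys n" by (rule polys.add[OF polys.const T])
      thus "(\<lambda>s. (2 + ?T s) ^ d) \<in> polys n" by (rule polys_pow)
    qed
  qed
  show ?thesis
  proof (rule bexI[OF _ q], intro allI impI)
    fix s s' j assume e: "exec P s s'" and j: "j < n"
    have "s' j \<le> bnd n (\<lambda>i j. M i j a) d j s" using d e j by blast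
    also have "\<dots> \<le> 2 * Fb d (?T s)" by (rule bnd_total)
    finally show "s' j \<le> 2 * (?T s * (2 + ?T s) ^ d)" unfolding Fb_def .
  qed
qed

end
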